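(* Let $\mathcal V\subset\mathbb Q$ satisfy Hypothesis (H) and let $\mathcal R\subset\mathbb Q$ satisfy property $\star_{\mathcal V}$. Then the $\mathbf K$-linear map $\mathscr H\to\mathscr H_{|\mathcal R}$, $f=\sum_\gamma f_\gamma z^\gamma\mapsto f_{|\mathcal R}=\sum_{\gamma\in\mathcal R}f_\gamma z^\gamma$, restricts to a $\mathbf K$-linear isomorphism from $\operatorname{Sol}(L,\mathscr H)=\{f\in\mathscr H: L(f)=0\}$ onto $\mathcal C_{\mathcal R}=\{f\in\mathscr H_{|\mathcal R}:\operatorname{supp} L(f)\cap\psi(\mathcal R)=\emptyset\}=\{f\in\mathscr H_{|\mathcal R}:\pi(\operatorname{supp} L(f))\cap\mathcal R=\emptyset\}$.
   Context: Let $\mathbf K$ be a field and $\ell\geq 2$ an integer. Let $\mathscr H$ be the field of Hahn series $f=\sum_{\gamma\in\mathbb Q}f_\gamma z^\gamma$ with coefficients in $\mathbf K$ and well-ordered support $\operatorname{supp} f=\{\gamma: f_\gamma\neq 0\}$; for $Q\subset\mathbb Q$, $\mathscr H_{|Q}=\{f\in\mathscr H:\operatorname{supp} f\subset Q\}$. Let $\phi_\ell$ be the automorphism $f(z)\mapsto f(z^\ell)$. Let $L=a_n\phi_\ell^n+\dots+a_0$ with $n\geq1$, $a_i\in\mathbf K[z]$, $a_0a_n\neq0$, acting by $L(f)=\sum_i a_i f(z^{\ell^i})$. Let $\mathcal P(L)=\{(\ell^i,j): 0\le i\le n,\ j\in\operatorname{supp} a_i\}$. The Newton polygon of $L$ is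 the convex hull of $\{(\ell^i,j): 0\le i\le n,\ j\geq\operatorname{val} a_i\}\subset\mathbb R^2$; the slopes of its non-vertical edges form $\mathcal S(L)$. Define $\Psi(v)=\{v\ell^i+j:(\ell^i,j)\in\mathcal P(L)\}$, $\psi(v)=\min\Psi(v)$, $\pi(q)=\max\{(q-j)/\ell^i:(\ell^i,j)\in\mathcal P(L)\}$; images of sets are taken elementwise. Hypothesis (H) on $\mathcal V\subset\mathbb Q$: (1) every $f\in\mathscr H$ with $L(f)=0$ satisfies $\operatorname{supp} f\subset\mathcal V$; (2) $\mathcal V$ is well-ordered; (3) $-\mathcal S(L)\subset\mathcal V$; (4) $\bigcup_{v\in\mathcal V}\pi(\Psi(v))=\mathcal V$. A set $\mathcal R\subset\mathbb Q$ satisfies $\star_{\mathcal V}$ if (a) $-\mathcal S(L)\subset\mathcal R\subset\mathcal V$ and (b) $\bigcup_{v\in\mathcal V\setminus\mathcal R}\pi(\Psi(v))=\mathcal V\setminus\mathcal R$. *)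

theory Defs
  imports "HOL-Analysis.Analysis" "HOL-Computational_Algebra.Polynomial"
begin

text \<open>Hahn series with rational exponents and coefficients in a field 'k are
represented by their coefficient functions rat => 'k with well-ordered support.\<close>

definition well_ordered_rat :: "rat set \<Rightarrow> bool" where
  "well_ordered_rat S \<longleftrightarrow> (\<forall>T\<subseteq>S. T \<noteq> {} \<longrightarrow> (\<exists>m\<in>T. \<forall>t\<in>T. m \<le> t))"

definition hsupp :: "(rat \<Rightarrow> 'k::zero) \<Rightarrow> rat set" where
  "hsupp f = {\<gamma>. f \<gamma> \<noteq> 0}"

definition hahn :: "(rat \<Rightarrow> 'k::zero) \<Rightarrow> bool" where
  "hahn f \<longleftrightarrow> well_ordered_rat (hsupp f)"

definition hrestr :: "rat set \<Rightarrow> (rat \<Rightarrow> 'k::zero) \<Rightarrow> rat \<Rightarrow> 'k" where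
  "hrestr Q f = (\<lambda>\<gamma>. if \<gamma> \<in> Q then f \<gamma> else 0)"

text \<open>The operator L = a_n phi_l^n + ... + a_0 acting by
  L(f) = sum_i a_i f(z^(l^i)); coefficient of z^q in a_i(z) f(z^(l^i)) is
  sum_j coeff a_i j * f((q-j)/l^i).\<close>
definition Lop :: "(nat \<Rightarrow> 'k::field poly) \<Rightarrow> nat \<Rightarrow> nat \<Rightarrow> (rat \<Rightarrow> 'k) \<Rightarrow> rat \<Rightarrow> 'k" where
  "Lop a n l f = (\<lambda>q. \<Sum>i\<le>n. \<Sum>j\<le>degree (a i).
      coeff (a i) j * f ((q - of_nat j) / of_nat (l ^ i)))"

definition Sol :: "(nat \<Rightarrow> 'k::field poly) \<Rightarrow> nat \<Rightarrow> nat \<Rightarrow> (rat \<Rightarrow> 'k) set" where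
  "Sol a n l = {f. hahn f \<and> Lop a n l f = (\<lambda>_. 0)}"

text \<open>P(L) = {(l^i, j) : 0 <= i <= n, j in supp a_i}, indexed by the pairs (i,j).\<close>
definition PL :: "(nat \<Rightarrow> 'k::field poly) \<Rightarrow> nat \<Rightarrow> (nat \<times> nat) set" where
  "PL a n = {(i, j). i \<le> n \<and> coeff (a i) j \<noteq> 0}"

definition Psi :: "(nat \<Rightarrow> 'k::field poly) \<Rightarrow> nat \<Rightarrow> nat \<Rightarrow> rat \<Rightarrow> rat set" where
  "Psi a n l v = {v * of_nat (l ^ i) + of_nat j | i j. (i, j) \<in> PL a n}"

definition psi :: "(nat \<Rightarrow> 'k::field poly) \<Rightarrow> nat \<Rightarrow> nat \<Rightarrow> rat \<Rightarrow> rat" where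
  "psi a n l v = Min (Psi a n l v)"

definition pi_op :: "(nat \<Rightarrow> 'k::field poly) \<Rightarrow> nat \<Rightarrow> nat \<Rightarrow> rat \<Rightarrow> rat" where
  "pi_op a n l q = Max {(q - of_nat j) / of_nat (l ^ i) | i j. (i, j) \<in> PL a n}"

definition pval :: "'k::zero poly \<Rightarrow> nat" where
  "pval p = (LEAST j. coeff p j \<noteq> 0)"

definition newton_polygon :: "(nat \<Rightarrow> 'k::field poly) \<Rightarrow> nat \<Rightarrow> nat \<Rightarrow> (real \<times> real) set" where
  "newton_polygon a n l = convex hull
     {(real (l ^ i), y) | i y. i \<le> n \<and> a i \<noteq> 0 \<and> real (pval (a i)) \<le> y}"

definition slopes :: "(nat \<Rightarrow> 'k::field poly) \<Rightarrow> nat \<Rightarrow> nat \<Rightarrow> real set" where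
  "slopes a n l = {s. \<exists>F. F face_of newton_polygon a n l \<and> aff_dim F = 1 \<and>
      (\<exists>p\<in>F. \<exists>q\<in>F. fst p < fst q \<and> s = (snd q - snd p) / (fst q - fst p))}"

definition neg_slopes_in :: "(nat \<Rightarrow> 'k::field poly) \<Rightarrow> nat \<Rightarrow> nat \<Rightarrow> rat set \<Rightarrow> bool" where
  "neg_slopes_in a n l V \<longleftrightarrow> (\<forall>s\<in>slopes a n l. \<exists>v\<in>V. real_of_rat v = - s)"

definition hypH :: "(nat \<Rightarrow> 'k::field poly) \<Rightarrow> nat \<Rightarrow> nat \<Rightarrow> rat set \<Rightarrow> bool" where
  "hypH a n l V \<longleftrightarrow>
     (\<forall>f. hahn f \<and> Lop a n l f = (\<lambda>_. 0) \<longrightarrow> hsupp f \<subseteq> V) \<and>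
     well_ordered_rat V \<and>
     neg_slopes_in a n l V \<and>
     (\<Union>v\<in>V. pi_op a n l ` Psi a n l v) = V"

definition star_prop :: "(nat \<Rightarrow> 'k::field poly) \<Rightarrow> nat \<Rightarrow> nat \<Rightarrow> rat set \<Rightarrow> rat set \<Rightarrow> bool" where
  "star_prop a n l V R \<longleftrightarrow>
     neg_slopes_in a n l R \<and> R \<subseteq> V \<and>
     (\<Union>v\<in>V - R. pi_op a n l ` Psi a n l v) = V - R"

definition CR :: "(nat \<Rightarrow> 'k::field poly) \<Rightarrow> nat \<Rightarrow> nat \<Rightarrow> rat set \<Rightarrow> (rat \<Rightarrow> 'k) set" where
  "CR a n l R = {f. hahn f \<and> hsupp f \<subseteq> R \<and> hsupp (Lop a n l f) \<inter> psi a n l ` R = {}}"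

definition CR' :: "(nat \<Rightarrow> 'k::field poly) \<Rightarrow> nat \<Rightarrow> nat \<Rightarrow> rat set \<Rightarrow> (rat \<Rightarrow> 'k) set" where
  "CR' a n l R = {f. hahn f \<and> hsupp f \<subseteq> R \<and> pi_op a n l ` hsupp (Lop a n l f) \<inter> R = {}}"

end

theory Submission
  imports Defs
begin


lemma gdiv_le: "(0::rat) < d \<Longrightarrow> (q - j) / d \<le> v \<longleftrightarrow> q \<le> v * d + j"
  by (simp add: pos_divide_le_eq algebra_simps)
lemma gdiv_less: "(0::rat) < d \<Longrightarrow> (q - j) / d < v \<longleftrightarrow> q < v * d + j"
  by (simp add: pos_divide_less_eq algebra_simps)
lemma gdiv_eq: "(0::rat) < d \<Longrightarrow> (q - j) / d = v \<longleftrightarrow> q = v * d + j"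
  by (auto simp: field_simps)

locale L0 =
  fixes a :: "nat \<Rightarrow> 'k::field poly" and n l :: nat
  assumes l2: "l \<ge> 2" and a0: "a 0 \<noteq> 0"
begin

lemma lpos: "(0::rat) < of_nat (l ^ i)"
  using l2 by simp

lemma PL_finite: "finite (PL a n)"
proof -
  have "PL a n \<subseteq> (SIGMA i:{..n}. {..degree (a i)})"
    by (auto simp: PL_def intro: le_degree)
  thus ?thesis by (rule finite_subset) auto
qed

lemma pval_coeff: "a i \<noteq> 0 \<Longrightarrow> coeff (a i) (pval (a i)) \<noteq> 0"
  unfolding pval_def by (rule LeastI_ex) (meson leading_coeff_neq_0)

lemma pval_le: "coeff p j \<noteq> 0 \<Longrightarrow> pval p \<le> j"
  unfolding pval_def by (rule Least_le)

lemma PL_ne: "(0, pval (a 0)) \<in> PL a n"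
  using pval_coeff[of 0] a0 by (simp add: PL_def)

lemma Psi_finite: "finite (Psi a n l v)"
proof -
  have "Psi a n l v = (\<lambda>(i,j). v * of_nat (l ^ i) + of_nat j) ` PL a n"
    by (auto simp: Psi_def)
  thus ?thesis using PL_finite by simp
qed

lemma Psi_ne: "Psi a n l v \<noteq> {}"
  using PL_ne by (auto simp: Psi_def)

lemma psi_le: "(i,j) \<in> PL a n \<Longrightarrow> psi a n l v \<le> v * of_nat (l ^ i) + of_nat j"
  unfolding psi_def by (rule Min_le[OF Psi_finite]) (auto simp: Psi_def)

lemma psi_in: "\<exists>i j. (i,j) \<in> PL a n \<and> psi a n l v = v * of_nat (l ^ i) + of_nat j"
proof -
  have "psi a n l v \<in> Psi a n l v" unfolding psi_def using Min_in[OF Psi_finite Psi_ne] .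
  thus ?thesis by (auto simp: Psi_def)
qed

lemma piset_finite: "finite {(q - of_nat j) / of_nat (l ^ i) | i j. (i, j) \<in> PL a n}"
proof -
  have "{(q - of_nat j) / of_nat (l ^ i) | i j. (i, j) \<in> PL a n} = (\<lambda>(i,j). (q - of_nat j) / of_nat (l ^ i)) ` PL a n"
    by auto
  thus ?thesis using PL_finite by simp
qed

lemma pi_ge: "(i,j) \<in> PL a n \<Longrightarrow> (q - of_nat j) / of_nat (l ^ i) \<le> pi_op a n l q"
  unfolding pi_op_def by (rule Max_ge[OF piset_finite]) auto

lemma pi_in: "\<exists>i j. (i,j) \<in> PL a n \<and> pi_op a n l q = (q - of_nat j) / of_nat (l ^ i)"
proof -
  have "pi_op a n l q \<in> {(q - of_nat j) / of_nat (l ^ i) | i j. (i, j) \<in> PL a n}"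
    unfolding pi_op_def by (rule Max_in[OF piset_finite]) (use PL_ne in auto)
  thus ?thesis by auto
qed

lemma div_le_iff: "((q::rat) - of_nat j) / of_nat (l ^ i) \<le> v \<longleftrightarrow> q \<le> v * of_nat (l ^ i) + of_nat j"
  by (rule gdiv_le[OF lpos])

lemma div_less_iff: "((q::rat) - of_nat j) / of_nat (l ^ i) < v \<longleftrightarrow> q < v * of_nat (l ^ i) + of_nat j"
  by (rule gdiv_less[OF lpos])

lemma div_eq_iff: "((q::rat) - of_nat j) / of_nat (l ^ i) = v \<longleftrightarrow> q = v * of_nat (l ^ i) + of_nat j"
  by (rule gdiv_eq[OF lpos])

lemma pi_psi: "pi_op a n l (psi a n l v) = v"
proof -
  obtain i j where ij: "(i,j) \<in> PL a n" "psi a n l v = v * of_nat (l ^ i) + of_nat j"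
    using psi_in by blast
  have "(psi a n l v - of_nat j) / of_nat (l ^ i) = v" using ij(2) div_eq_iff by blast
  hence "v \<le> pi_op a n l (psi a n l v)"
    using pi_ge[OF ij(1), of "psi a n l v"] by simp
  moreover obtain i' j' where ij': "(i',j') \<in> PL a n" "pi_op a n l (psi a n l v) = (psi a n l v - of_nat j') / of_nat (l ^ i')"
    using pi_in by blast
  have "pi_op a n l (psi a n l v) \<le> v"
    using ij' psi_le[OF ij'(1), of v] div_le_iff by metis
  ultimately show ?thesis by simp
qed

lemma psi_pi: "psi a n l (pi_op a n l q) = q"
proof -
  obtain i j where ij: "(i,j) \<in> PL a n" "pi_op a n l q = (q - of_nat j) / of_nat (l ^ i)"
    using pi_in by blast
  have "psi a n l (pi_op a n l q) \<le> q"
    using psi_le[OF ij(1), of "pi_op a n l q"] ij(2) div_eq_iff by metis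
  moreover obtain i' j' where ij': "(i',j') \<in> PL a n" "psi a n l (pi_op a n l q) = pi_op a n l q * of_nat (l ^ i') + of_nat j'"
    using psi_in by blast
  have "q \<le> psi a n l (pi_op a n l q)"
    using ij' pi_ge[OF ij'(1), of q] div_le_iff by metis
  ultimately show ?thesis by simp
qed

lemma Lop_PL: "Lop a n l f q = (\<Sum>(i,j)\<in>PL a n. coeff (a i) j * f ((q - of_nat j) / of_nat (l ^ i)))"
proof -
  have "Lop a n l f q = (\<Sum>(i,j)\<in>(SIGMA i:{..n}. {..degree (a i)}). coeff (a i) j * f ((q - of_nat j) / of_nat (l ^ i)))"
    unfolding Lop_def by (simp add: sum.Sigma)
  also have "\<dots> = (\<Sum>(i,j)\<in>PL a n. coeff (a i) j * f ((q - of_nat j) / of_nat (l ^ i)))"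
    by (rule sum.mono_neutral_right) (auto simp: PL_def intro: le_degree)
  finally show ?thesis .
qed

lemma Lop_supp: "Lop a n l f q \<noteq> 0 \<Longrightarrow> \<exists>w\<in>hsupp f. q \<in> Psi a n l w"
proof -
  assume "Lop a n l f q \<noteq> 0"
  then obtain i j where ij: "(i,j) \<in> PL a n" "f ((q - of_nat j) / of_nat (l ^ i)) \<noteq> 0"
    unfolding Lop_PL by (metis (no_types, lifting) case_prod_conv mult_zero_right sum.neutral prod.collapse)
  let ?w = "(q - of_nat j) / of_nat (l ^ i)"
  have "q = ?w * of_nat (l ^ i) + of_nat j" using div_eq_iff by blast
  hence "q \<in> Psi a n l ?w" unfolding Psi_def using ij(1) by blast
  moreover have "?w \<in> hsupp f" using ij(2) by (simp add: hsupp_def)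
  ultimately show ?thesis by blast
qed

lemma Lop_add: "Lop a n l (\<lambda>x. f x + g x) q = Lop a n l f q + Lop a n l g q"
  unfolding Lop_def by (simp add: distrib_left sum.distrib)

lemma Lop_diff: "Lop a n l (\<lambda>x. f x - g x) q = Lop a n l f q - Lop a n l g q"
  unfolding Lop_def by (simp add: right_diff_distrib sum_subtractf)

end



context L0 begin

lemma min_unique_aux:
  assumes ns: "neg_slopes_in a n l R" and vR: "v \<notin> R"
    and p1: "(i1,j1) \<in> PL a n" and p2: "(i2,j2) \<in> PL a n"
    and e1: "v * of_nat (l ^ i1) + of_nat j1 = psi a n l v"
    and e2: "v * of_nat (l ^ i2) + of_nat j2 = psi a n l v"
    and lt: "i1 < i2"
  shows False
proof -
  define vr where "vr = real_of_rat v"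
  define c where "c = real_of_rat (psi a n l v)"
  define G where "G = {(real (l ^ i), y) | i y. i \<le> n \<and> a i \<noteq> 0 \<and> real (pval (a i)) \<le> y}"
  have NPdef: "newton_polygon a n l = convex hull G" unfolding newton_polygon_def G_def ..
  have cast: "real_of_rat (v * of_nat (l ^ i) + of_nat j) = vr * real (l ^ i) + real j" for i j
    by (simp add: vr_def of_rat_add of_rat_mult of_rat_power)
  have Gsub: "G \<subseteq> {x. (vr, 1) \<bullet> x \<ge> c}"
  proof
    fix x assume "x \<in> G"
    then obtain i y where x: "x = (real (l ^ i), y)" "i \<le> n" "a i \<noteq> 0" "real (pval (a i)) \<le> y"
      unfolding G_def by blast
    have "(i, pval (a i)) \<in> PL a n" using x pval_coeff by (simp add: PL_def)
    hence "psi a n l v \<le> v * of_nat (l ^ i) + of_nat (pval (a i))" by (rule psi_le)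
    hence "c \<le> vr * real (l ^ i) + real (pval (a i))"
      unfolding c_def cast[symmetric] by (simp add: of_rat_less_eq)
    thus "x \<in> {x. (vr, 1) \<bullet> x \<ge> c}" using x by (simp add: inner_Pair)
  qed
  have "convex hull G \<subseteq> {x. (vr, 1) \<bullet> x \<ge> c}"
    by (rule hull_minimal[OF Gsub]) (rule convex_halfspace_ge)
  hence NPsub: "\<And>x. x \<in> newton_polygon a n l \<Longrightarrow> (vr, 1) \<bullet> x \<ge> c"
    using NPdef by blast
  define F where "F = newton_polygon a n l \<inter> {x. (vr, 1) \<bullet> x = c}"
  have face: "F face_of newton_polygon a n l"
    unfolding F_def NPdef
    by (rule face_of_Int_supporting_hyperplane_ge) (use NPsub NPdef in auto)
  have inG: "(real (l ^ i), real j) \<in> G" if "(i,j) \<in> PL a n" for i j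
  proof -
    have "coeff (a i) j \<noteq> 0" "i \<le> n" using that by (auto simp: PL_def)
    moreover hence "a i \<noteq> 0" by auto
    ultimately show ?thesis unfolding G_def using pval_le by fastforce
  qed
  have inF: "(real (l ^ i), real j) \<in> F"
    if "(i,j) \<in> PL a n" "v * of_nat (l ^ i) + of_nat j = psi a n l v" for i j
  proof -
    have "(real (l ^ i), real j) \<in> newton_polygon a n l"
      unfolding NPdef using inG[OF that(1)] by (rule hull_inc)
    moreover have "vr * real (l ^ i) + real j = c"
      using that(2) unfolding c_def cast[symmetric] by simp
    ultimately show ?thesis unfolding F_def by (simp add: inner_Pair)
  qed
  have l1: "1 < l" using l2 by simp
  have Lt: "real (l ^ i1) < real (l ^ i2)"
    using power_strict_increasing[OF lt l1] by (simp only: of_nat_less_iff)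
  have P1: "(real (l ^ i1), real j1) \<in> F" using inF p1 e1 by blast
  have P2: "(real (l ^ i2), real j2) \<in> F" using inF p2 e2 by blast
  have "aff_dim F \<le> aff_dim {x::real\<times>real. (vr, 1) \<bullet> x = c}"
    by (rule aff_dim_subset) (auto simp: F_def)
  also have "\<dots> = 1" by (subst aff_dim_hyperplane) (auto simp: zero_prod_def)
  finally have ad1: "aff_dim F \<le> 1" .
  have "aff_dim {(real (l ^ i1), real j1), (real (l ^ i2), real j2)} \<le> aff_dim F"
    by (rule aff_dim_subset) (use P1 P2 in auto)
  hence "aff_dim F = 1" using ad1 Lt by auto
  have r1: "vr * real (l ^ i1) + real j1 = c" using e1 unfolding c_def cast[symmetric] by simp
  have r2: "vr * real (l ^ i2) + real j2 = c" using e2 unfolding c_def cast[symmetric] by simp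
  define s where "s = (real j2 - real j1) / (real (l ^ i2) - real (l ^ i1))"
  have s: "s = - vr"
  proof -
    have "real j2 - real j1 = - vr * (real (l ^ i2) - real (l ^ i1))" using r1 r2 by (simp add: algebra_simps)
    thus ?thesis unfolding s_def using Lt by simp
  qed
  have "s \<in> slopes a n l"
    unfolding slopes_def
  proof (intro CollectI exI[of _ F] conjI face \<open>aff_dim F = 1\<close>)
    show "\<exists>p\<in>F. \<exists>q\<in>F. fst p < fst q \<and> s = (snd q - snd p) / (fst q - fst p)"
      apply (rule bexI[OF _ P1], rule bexI[OF _ P2])
      using Lt unfolding s_def by simp
  qed
  then obtain r where "r \<in> R" "real_of_rat r = - s" using ns unfolding neg_slopes_in_def by blast
  hence "r = v" using s vr_def by simp
  thus False using \<open>r \<in> R\<close> vR by simp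
qed

lemma min_unique:
  assumes ns: "neg_slopes_in a n l R" and vR: "v \<notin> R"
    and p1: "(i1,j1) \<in> PL a n" and p2: "(i2,j2) \<in> PL a n"
    and e1: "v * of_nat (l ^ i1) + of_nat j1 = psi a n l v"
    and e2: "v * of_nat (l ^ i2) + of_nat j2 = psi a n l v"
  shows "(i1,j1) = (i2,j2)"
proof (cases i1 i2 rule: linorder_cases)
  case less thus ?thesis using min_unique_aux[OF ns vR p1 p2 e1 e2] by simp
next
  case greater thus ?thesis using min_unique_aux[OF ns vR p2 p1 e2 e1] by simp
next
  case equal thus ?thesis using e1 e2 by simp
qed

end



lemma wo_sub: "well_ordered_rat S \<Longrightarrow> T \<subseteq> S \<Longrightarrow> well_ordered_rat T"
  unfolding well_ordered_rat_def by blast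

lemma wo_min: "well_ordered_rat S \<Longrightarrow> x \<in> S \<Longrightarrow> \<exists>m\<in>S. \<forall>t\<in>S. m \<le> t"
  unfolding well_ordered_rat_def by blast

locale L1 = L0 a n l for a :: "nat \<Rightarrow> 'k::field poly" and n l +
  fixes V R :: "rat set"
  assumes H: "hypH a n l V" and st: "star_prop a n l V R"
begin

lemma H1: "hahn f \<Longrightarrow> Lop a n l f = (\<lambda>_. 0) \<Longrightarrow> hsupp f \<subseteq> V"
  using H unfolding hypH_def by blast
lemma woV: "well_ordered_rat V" using H unfolding hypH_def by blast
lemma ns: "neg_slopes_in a n l R" using st unfolding star_prop_def by blast
lemma RV: "R \<subseteq> V" using st unfolding star_prop_def by blast
lemma clV: "w \<in> V \<Longrightarrow> q \<in> Psi a n l w \<Longrightarrow> pi_op a n l q \<in> V"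
  using H unfolding hypH_def by blast
lemma clR: "w \<in> V - R \<Longrightarrow> q \<in> Psi a n l w \<Longrightarrow> pi_op a n l q \<in> V - R"
  using st unfolding star_prop_def by blast

lemma Lop_R_zero:
  assumes "hsupp f \<subseteq> V - R" "r \<in> R"
  shows "Lop a n l f (psi a n l r) = 0"
proof (rule ccontr)
  assume "Lop a n l f (psi a n l r) \<noteq> 0"
  then obtain w where "w \<in> hsupp f" "psi a n l r \<in> Psi a n l w" using Lop_supp by blast
  hence "pi_op a n l (psi a n l r) \<in> V - R" using clR assms by blast
  thus False using pi_psi assms by simp
qed

definition mm :: "rat \<Rightarrow> nat \<times> nat" where
  "mm v = (SOME p. p \<in> PL a n \<and> v * of_nat (l ^ fst p) + of_nat (snd p) = psi a n l v)"

lemma mm: "mm v \<in> PL a n \<and> v * of_nat (l ^ fst (mm v)) + of_nat (snd (mm v)) = psi a n l v"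
proof -
  obtain i j where "(i,j) \<in> PL a n" "psi a n l v = v * of_nat (l ^ i) + of_nat j" using psi_in by blast
  hence "\<exists>p. p \<in> PL a n \<and> v * of_nat (l ^ fst p) + of_nat (snd p) = psi a n l v" by force
  thus ?thesis unfolding mm_def by (rule someI_ex)
qed

lemma mm_coeff: "coeff (a (fst (mm v))) (snd (mm v)) \<noteq> 0"
  using mm[of v] by (cases "mm v") (simp add: PL_def)

lemma mm_arg: "(psi a n l v - of_nat (snd (mm v))) / of_nat (l ^ fst (mm v)) = v"
  using mm[of v] div_eq_iff by metis

lemma others_less:
  assumes "v \<in> V - R" "(i,j) \<in> PL a n - {mm v}"
  shows "(psi a n l v - of_nat j) / of_nat (l ^ i) < v"
proof -
  have le: "psi a n l v \<le> v * of_nat (l ^ i) + of_nat j" using assms psi_le by blast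
  have "psi a n l v \<noteq> v * of_nat (l ^ i) + of_nat j"
  proof
    assume e: "psi a n l v = v * of_nat (l ^ i) + of_nat j"
    have "(i,j) = (fst (mm v), snd (mm v))"
      by (rule min_unique[OF ns _ _ _ e[symmetric]]) (use assms mm[of v] in auto)
    thus False using assms by simp
  qed
  hence "psi a n l v < v * of_nat (l ^ i) + of_nat j" using le by simp
  thus ?thesis using div_less_iff by blast
qed

lemma Lop_split:
  "Lop a n l f (psi a n l v) = coeff (a (fst (mm v))) (snd (mm v)) * f v
     + (\<Sum>(i,j)\<in>PL a n - {mm v}. coeff (a i) j * f ((psi a n l v - of_nat j) / of_nat (l ^ i)))"
proof -
  have "Lop a n l f (psi a n l v) = (\<Sum>(i,j)\<in>PL a n. coeff (a i) j * f ((psi a n l v - of_nat j) / of_nat (l ^ i)))"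
    by (rule Lop_PL)
  also have "\<dots> = (case mm v of (i,j) \<Rightarrow> coeff (a i) j * f ((psi a n l v - of_nat j) / of_nat (l ^ i)))
     + (\<Sum>(i,j)\<in>PL a n - {mm v}. coeff (a i) j * f ((psi a n l v - of_nat j) / of_nat (l ^ i)))"
    by (rule sum.remove[OF PL_finite]) (use mm in blast)
  also have "(case mm v of (i,j) \<Rightarrow> coeff (a i) j * f ((psi a n l v - of_nat j) / of_nat (l ^ i)))
     = coeff (a (fst (mm v))) (snd (mm v)) * f v"
    using mm_arg[of v] by (simp add: case_prod_beta)
  finally show ?thesis .
qed

lemma inj_core:
  assumes "hsupp h \<subseteq> V - R" "\<And>q. Lop a n l h q = 0"
  shows "h = (\<lambda>_. 0)"
proof (rule ccontr)
  assume "h \<noteq> (\<lambda>_. 0)"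
  then obtain x where "h x \<noteq> 0" by auto
  hence "x \<in> hsupp h" by (simp add: hsupp_def)
  then obtain v where v: "v \<in> hsupp h" "\<forall>t\<in>hsupp h. v \<le> t"
    using wo_min[OF wo_sub[OF woV]] assms(1) by blast
  have vVR: "v \<in> V - R" using v assms by blast
  have "(\<Sum>(i,j)\<in>PL a n - {mm v}. coeff (a i) j * h ((psi a n l v - of_nat j) / of_nat (l ^ i))) = 0"
  proof (rule sum.neutral, rule ballI)
    fix x assume x: "x \<in> PL a n - {mm v}"
    obtain i j where xij: "x = (i,j)" by (cases x)
    have "(i,j) \<in> PL a n - {mm v}" using x xij by simp
    hence "(psi a n l v - of_nat j) / of_nat (l ^ i) < v" using others_less vVR by blast
    hence "h ((psi a n l v - of_nat j) / of_nat (l ^ i)) = 0" using v(2) by (force simp: hsupp_def)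
    thus "(case x of (i,j) \<Rightarrow> coeff (a i) j * h ((psi a n l v - of_nat j) / of_nat (l ^ i))) = 0" using xij by simp
  qed
  hence "Lop a n l h (psi a n l v) = coeff (a (fst (mm v))) (snd (mm v)) * h v"
    using Lop_split[of h v] by simp
  moreover have "h v \<noteq> 0" using v by (simp add: hsupp_def)
  ultimately show False using assms(2) mm_coeff[of v] by simp
qed

end



context L1 begin

definition rr :: "(rat \<times> rat) set" where
  "rr = {(x,y). x \<in> V \<and> y \<in> V \<and> x < y}"

lemma wf_rr: "wf rr"
proof (rule wfI_min)
  fix x :: rat and Q assume xQ: "x \<in> Q"
  show "\<exists>z\<in>Q. \<forall>y. (y, z) \<in> rr \<longrightarrow> y \<notin> Q"
  proof (cases "Q \<inter> V = {}")
    case True thus ?thesis using xQ by (auto simp: rr_def)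
  next
    case False
    then obtain y where "y \<in> Q \<inter> V" by blast
    then obtain m where m: "m \<in> Q \<inter> V" "\<forall>t\<in>Q \<inter> V. m \<le> t"
      using wo_min[OF wo_sub[OF woV]] by (metis Int_lower2)
    have "\<forall>y. (y, m) \<in> rr \<longrightarrow> y \<notin> Q"
    proof (intro allI impI)
      fix y assume "(y, m) \<in> rr"
      hence "y \<in> V" "y < m" by (auto simp: rr_def)
      thus "y \<notin> Q" using m(2) by force
    qed
    thus ?thesis using m(1) by blast
  qed
qed

definition HH :: "(rat \<Rightarrow> 'k) \<Rightarrow> (rat \<Rightarrow> 'k) \<Rightarrow> rat \<Rightarrow> 'k" where
  "HH g F v = (if v \<in> R then g v else if v \<in> V then
     - (\<Sum>(i,j)\<in>PL a n - {mm v}. coeff (a i) j *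
          (if (psi a n l v - of_nat j) / of_nat (l ^ i) \<in> V \<and> (psi a n l v - of_nat j) / of_nat (l ^ i) < v
           then F ((psi a n l v - of_nat j) / of_nat (l ^ i)) else 0))
       / coeff (a (fst (mm v))) (snd (mm v))
     else 0)"

definition ext_sol :: "(rat \<Rightarrow> 'k) \<Rightarrow> rat \<Rightarrow> 'k" where
  "ext_sol g = wfrec rr (HH g)"

lemma HH_cut: "HH g (cut F rr v) v = HH g F v"
proof (cases "v \<in> R \<or> v \<notin> V")
  case True thus ?thesis unfolding HH_def by auto
next
  case False
  hence vV: "v \<in> V" by blast
  have "(\<Sum>(i,j)\<in>PL a n - {mm v}. coeff (a i) j *
          (if (psi a n l v - of_nat j) / of_nat (l ^ i) \<in> V \<and> (psi a n l v - of_nat j) / of_nat (l ^ i) < v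
           then cut F rr v ((psi a n l v - of_nat j) / of_nat (l ^ i)) else 0))
     = (\<Sum>(i,j)\<in>PL a n - {mm v}. coeff (a i) j *
          (if (psi a n l v - of_nat j) / of_nat (l ^ i) \<in> V \<and> (psi a n l v - of_nat j) / of_nat (l ^ i) < v
           then F ((psi a n l v - of_nat j) / of_nat (l ^ i)) else 0))"
    by (rule sum.cong[OF refl]) (clarsimp simp: cut_apply rr_def vV)
  thus ?thesis unfolding HH_def by simp
qed

lemma ext_eq: "ext_sol g v = HH g (ext_sol g) v"
  unfolding ext_sol_def using wfrec[OF wf_rr, of "HH g" v] HH_cut by simp

lemma ext_R: "v \<in> R \<Longrightarrow> ext_sol g v = g v"
  using ext_eq[of g v] by (simp add: HH_def)

lemma ext_notV: "v \<notin> V \<Longrightarrow> ext_sol g v = 0"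
  using ext_eq[of g v] RV by (auto simp: HH_def)

lemma ext_supp: "hsupp (ext_sol g) \<subseteq> V"
  using ext_notV by (auto simp: hsupp_def)

lemma ext_restr: "hsupp g \<subseteq> R \<Longrightarrow> hrestr R (ext_sol g) = g"
  by (rule ext) (auto simp: hrestr_def ext_R hsupp_def)

lemma ext_VR: "v \<in> V - R \<Longrightarrow> Lop a n l (ext_sol g) (psi a n l v) = 0"
proof -
  assume vVR: "v \<in> V - R"
  let ?G = "ext_sol g"
  let ?S = "\<Sum>(i,j)\<in>PL a n - {mm v}. coeff (a i) j *
          (if (psi a n l v - of_nat j) / of_nat (l ^ i) \<in> V \<and> (psi a n l v - of_nat j) / of_nat (l ^ i) < v
           then ?G ((psi a n l v - of_nat j) / of_nat (l ^ i)) else 0)"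
  have Gv: "?G v = - ?S / coeff (a (fst (mm v))) (snd (mm v))"
    using ext_eq[of g v] vVR by (simp add: HH_def)
  have "(\<Sum>(i,j)\<in>PL a n - {mm v}. coeff (a i) j * ?G ((psi a n l v - of_nat j) / of_nat (l ^ i))) = ?S"
  proof (rule sum.cong[OF refl])
    fix x assume x: "x \<in> PL a n - {mm v}"
    obtain i j where xij: "x = (i,j)" by (cases x)
    have "(psi a n l v - of_nat j) / of_nat (l ^ i) < v" using others_less vVR x xij by blast
    thus "(case x of (i,j) \<Rightarrow> coeff (a i) j * ?G ((psi a n l v - of_nat j) / of_nat (l ^ i))) =
      (case x of (i,j) \<Rightarrow> coeff (a i) j *
          (if (psi a n l v - of_nat j) / of_nat (l ^ i) \<in> V \<and> (psi a n l v - of_nat j) / of_nat (l ^ i) < v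
           then ?G ((psi a n l v - of_nat j) / of_nat (l ^ i)) else 0))"
      using xij ext_notV by auto
  qed
  hence "Lop a n l ?G (psi a n l v) = coeff (a (fst (mm v))) (snd (mm v)) * ?G v + ?S"
    using Lop_split[of ?G v] by simp
  also have "\<dots> = 0" using Gv mm_coeff[of v] by simp
  finally show ?thesis .
qed

lemma ext_sol_Sol:
  assumes g: "g \<in> CR a n l R"
  shows "ext_sol g \<in> Sol a n l"
proof -
  let ?G = "ext_sol g"
  have gR: "hsupp g \<subseteq> R" using g by (simp add: CR_def)
  have gL: "\<And>r. r \<in> R \<Longrightarrow> Lop a n l g (psi a n l r) = 0"
    using g unfolding CR_def hsupp_def by blast
  have dec: "?G = (\<lambda>x. g x + hrestr (- R) ?G x)"
  proof (rule ext)
    fix x show "?G x = g x + hrestr (- R) ?G x"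
    proof (cases "x \<in> R")
      case True thus ?thesis by (simp add: hrestr_def ext_R)
    next
      case False
      hence "g x = 0" using gR by (auto simp: hsupp_def)
      thus ?thesis using False by (simp add: hrestr_def)
    qed
  qed
  have sVR: "hsupp (hrestr (- R) ?G) \<subseteq> V - R"
    using ext_supp by (auto simp: hsupp_def hrestr_def)
  have zR: "Lop a n l ?G (psi a n l r) = 0" if "r \<in> R" for r
  proof -
    have "Lop a n l ?G (psi a n l r) = Lop a n l (\<lambda>x. g x + hrestr (- R) ?G x) (psi a n l r)"
      using dec by metis
    also have "\<dots> = 0" using Lop_add gL[OF that] Lop_R_zero[OF sVR that] by simp
    finally show ?thesis .
  qed
  have "Lop a n l ?G q = 0" for q
  proof (rule ccontr)
    assume "Lop a n l ?G q \<noteq> 0"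
    then obtain w where w: "w \<in> hsupp ?G" "q \<in> Psi a n l w" using Lop_supp by blast
    have pV: "pi_op a n l q \<in> V" using clV w ext_supp by blast
    have "Lop a n l ?G (psi a n l (pi_op a n l q)) = 0"
      using pV zR ext_VR by (cases "pi_op a n l q \<in> R") auto
    thus False using psi_pi \<open>Lop a n l ?G q \<noteq> 0\<close> by simp
  qed
  moreover have "hahn ?G" unfolding hahn_def by (rule wo_sub[OF woV ext_supp])
  ultimately show ?thesis unfolding Sol_def by auto
qed

lemma restr_CR:
  assumes f: "f \<in> Sol a n l"
  shows "hrestr R f \<in> CR a n l R"
proof -
  have hf: "hahn f" and Lf: "Lop a n l f = (\<lambda>_. 0)" using f by (auto simp: Sol_def)
  have sV: "hsupp f \<subseteq> V" using H1 hf Lf .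
  have dec: "hrestr R f = (\<lambda>x. f x - hrestr (- R) f x)"
    by (auto simp: hrestr_def)
  have sVR: "hsupp (hrestr (- R) f) \<subseteq> V - R"
    using sV by (auto simp: hsupp_def hrestr_def)
  have "Lop a n l (hrestr R f) (psi a n l r) = 0" if "r \<in> R" for r
    using Lop_diff[of f "hrestr (- R) f"] Lop_R_zero[OF sVR that] Lf dec by simp
  hence "hsupp (Lop a n l (hrestr R f)) \<inter> psi a n l ` R = {}" by (auto simp: hsupp_def)
  moreover have "hsupp (hrestr R f) \<subseteq> R" by (auto simp: hsupp_def hrestr_def)
  moreover have "hahn (hrestr R f)" using hf unfolding hahn_def
    by (rule wo_sub) (auto simp: hsupp_def hrestr_def)
  ultimately show ?thesis unfolding CR_def by blast
qed

lemma restr_inj: "inj_on (hrestr R) (Sol a n l)"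
proof (rule inj_onI)
  fix f g assume f: "f \<in> Sol a n l" and g: "g \<in> Sol a n l" and e: "hrestr R f = hrestr R g"
  have sf: "hsupp f \<subseteq> V" using f H1 by (auto simp: Sol_def)
  have sg: "hsupp g \<subseteq> V" using g H1 by (auto simp: Sol_def)
  have eR: "x \<in> R \<Longrightarrow> f x = g x" for x using fun_cong[OF e, of x] by (simp add: hrestr_def)
  have "hsupp (\<lambda>x. f x - g x) \<subseteq> V - R"
  proof
    fix x assume "x \<in> hsupp (\<lambda>x. f x - g x)"
    hence ne: "f x \<noteq> g x" by (simp add: hsupp_def)
    hence "f x \<noteq> 0 \<or> g x \<noteq> 0" by auto
    hence "x \<in> V" using sf sg by (auto simp: hsupp_def)
    moreover have "x \<notin> R" using ne eR by blast
    ultimately show "x \<in> V - R" by blast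
  qed
  moreover have "Lop a n l (\<lambda>x. f x - g x) q = 0" for q
    using f g Lop_diff[of f g q] by (simp add: Sol_def)
  ultimately have "(\<lambda>x. f x - g x) = (\<lambda>_. 0)" by (rule inj_core)
  hence "\<And>x. f x - g x = 0" by (metis (mono_tags))
  thus "f = g" by (simp add: fun_eq_iff)
qed

lemma psi_pi_set: "S \<inter> psi a n l ` R = {} \<longleftrightarrow> pi_op a n l ` S \<inter> R = {}"
proof
  assume A: "S \<inter> psi a n l ` R = {}"
  show "pi_op a n l ` S \<inter> R = {}"
  proof (rule ccontr)
    assume "pi_op a n l ` S \<inter> R \<noteq> {}"
    then obtain q where q: "q \<in> S" "pi_op a n l q \<in> R" by blast
    hence "psi a n l (pi_op a n l q) \<in> psi a n l ` R" by blast
    hence "q \<in> psi a n l ` R" by (simp only: psi_pi)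
    thus False using A q(1) by blast
  qed
next
  assume A: "pi_op a n l ` S \<inter> R = {}"
  show "S \<inter> psi a n l ` R = {}"
  proof (rule ccontr)
    assume "S \<inter> psi a n l ` R \<noteq> {}"
    then obtain r where r: "psi a n l r \<in> S" "r \<in> R" by blast
    hence "pi_op a n l (psi a n l r) \<in> pi_op a n l ` S" by blast
    hence "r \<in> pi_op a n l ` S" by (simp only: pi_psi)
    thus False using A r(2) by blast
  qed
qed

lemma main:
  "CR a n l R = CR' a n l R \<and> bij_betw (hrestr R) (Sol a n l) (CR a n l R)"
proof
  show "CR a n l R = CR' a n l R" unfolding CR_def CR'_def by (simp only: psi_pi_set)
  have "hrestr R ` Sol a n l = CR a n l R"
  proof
    show "hrestr R ` Sol a n l \<subseteq> CR a n l R" using restr_CR by blast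
    show "CR a n l R \<subseteq> hrestr R ` Sol a n l"
    proof
      fix g assume g: "g \<in> CR a n l R"
      hence "g = hrestr R (ext_sol g)" using ext_restr by (simp add: CR_def)
      thus "g \<in> hrestr R ` Sol a n l" using ext_sol_Sol[OF g] by blast
    qed
  qed
  thus "bij_betw (hrestr R) (Sol a n l) (CR a n l R)" using restr_inj by (simp add: bij_betw_def)
qed

end

theorem mainTheorem17:
  fixes a :: "nat \<Rightarrow> 'k::field poly" and n l :: nat and V R :: "rat set"
  assumes "l \<ge> 2" and "n \<ge> 1" and "a 0 \<noteq> 0" and "a n \<noteq> 0"
    and "hypH a n l V" and "star_prop a n l V R"
  shows "CR a n l R = CR' a n l R
    \<and> bij_betw (hrestr R) (Sol a n l) (CR a n l R)
    \<and> (\<forall>(c::'k) f g. hrestr R (\<lambda>\<gamma>. c * f \<gamma> + g \<gamma>) = (\<lambda>\<gamma>. c * hrestr R f \<gamma> + hrestr R g \<gamma>))"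
proof -
  interpret L1 a n l V R
    by unfold_locales (use assms in auto)
  have "\<forall>(c::'k) f g. hrestr R (\<lambda>\<gamma>. c * f \<gamma> + g \<gamma>) = (\<lambda>\<gamma>. c * hrestr R f \<gamma> + hrestr R g \<gamma>)"
    by (auto simp: hrestr_def)
  thus ?thesis using main by blast
qed


end
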